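(* With the notation of the context, let $0\le\lambda_{k-1}<\lambda_k\le1$, and let $x$ solve $\frac{dx}{d\lambda}=A(\lambda)x+b(\lambda)$ on $[\lambda_{k-1},\lambda_k]$. Set $s_{i,k}=\sqrt{1+\lambda_k\alpha_i}$, $s_{i,k-1}=\sqrt{1+\lambda_{k-1}\alpha_i}$. Then $$x(\lambda_k)=\big(I+E\,\Omega_k F^\top\big)x(\lambda_{k-1})+E\,c_k,$$ where $\Omega_k=\mathrm{diag}(\Omega_{ii,k})$ with $\Omega_{ii,k}=\dfrac{s_{i,k-1}/s_{i,k}-1}{\alpha_i}$, and $c_k\in\mathbb{R}^{n_z}$ has entries $$c_{i,k}=\frac{\alpha_i\tilde z_i\,(\lambda_k s_{i,k-1}-\lambda_{k-1}s_{i,k})+\tilde x_i\,(s_{i,k-1}-s_{i,k})}{\alpha_i\,s_{i,k}^2\,s_{i,k-1}}.$$ In particular $I+E\Omega_kF^\top=\exp\!\big(\int_{\lambda_{k-1}}^{\lambda_k}A(\mu)\,d\mu\big)$.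
   Context: $P\in\mathbb{R}^{n_x\times n_x}$, $R\in\mathbb{R}^{n_z\times n_z}$ symmetric positive definite, $H\in\mathbb{R}^{n_z\times n_x}$ of full row rank (held fixed over the interval), $\bar x\in\mathbb{R}^{n_x}$, $z\in\mathbb{R}^{n_z}$. $R^{-1/2}$ is the inverse of the symmetric positive definite square root of $R$. $A(\lambda)=-\tfrac12 PH^\top(\lambda HPH^\top+R)^{-1}H$, $b(\lambda)=(I+2\lambda A(\lambda))\big[(I+\lambda A(\lambda))PH^\top R^{-1}z+A(\lambda)\bar x\big]$. Let $D=R^{-1/2}HPH^\top R^{-1/2}=V\Lambda V^\top$ with $V$ orthogonal, $\Lambda=\mathrm{diag}(\alpha_1,\dots,\alpha_{n_z})$, $\alpha_i>0$; $E=PH^\top R^{-1/2}V$, $F^\top=V^\top R^{-1/2}H$, $\tilde z=V^\top R^{-1/2}z$, $\tilde x=F^\top\bar x$. *)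

theory Defs
  imports "HOL-Analysis.Analysis"
begin

definition sym_mat :: "real^'n^'n \<Rightarrow> bool" where
  "sym_mat M \<longleftrightarrow> transpose M = M"

definition pos_def :: "real^'n^'n \<Rightarrow> bool" where
  "pos_def M \<longleftrightarrow> sym_mat M \<and> (\<forall>v. v \<noteq> 0 \<longrightarrow> v \<bullet> (M *v v) > 0)"

definition mat_sqrt :: "real^'n^'n \<Rightarrow> real^'n^'n" where
  "mat_sqrt R = (THE S. pos_def S \<and> S ** S = R)"

definition mat_inv_sqrt :: "real^'n^'n \<Rightarrow> real^'n^'n" where
  "mat_inv_sqrt R = matrix_inv (mat_sqrt R)"

definition diag_mat :: "('n \<Rightarrow> real) \<Rightarrow> real^'n^'n" where
  "diag_mat d = (\<chi> i j. if i = j then d i else 0)"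

fun mat_pow :: "real^'n^'n \<Rightarrow> nat \<Rightarrow> real^'n^'n" where
  "mat_pow M 0 = mat 1"
| "mat_pow M (Suc k) = M ** mat_pow M k"

definition mat_exp :: "real^'n^'n \<Rightarrow> real^'n^'n" where
  "mat_exp M = (\<Sum>k. (1 / fact k) *\<^sub>R mat_pow M k)"

definition A_mat :: "real^'nx^'nx \<Rightarrow> real^'nx^'nz \<Rightarrow> real^'nz^'nz \<Rightarrow> real \<Rightarrow> real^'nx^'nx" where
  "A_mat P H R l = (- (1/2)) *\<^sub>R
     (P ** transpose H ** matrix_inv (l *\<^sub>R (H ** P ** transpose H) + R) ** H)"

definition b_vec :: "real^'nx^'nx \<Rightarrow> real^'nx^'nz \<Rightarrow> real^'nz^'nz \<Rightarrow> real^'nx \<Rightarrow> real^'nz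
    \<Rightarrow> real \<Rightarrow> real^'nx" where
  "b_vec P H R xbar z l =
     (mat 1 + (2 * l) *\<^sub>R A_mat P H R l) *v
       ((mat 1 + l *\<^sub>R A_mat P H R l) *v (P ** transpose H ** matrix_inv R *v z)
        + A_mat P H R l *v xbar)"

end

theory Submission
  imports Defs
begin

lemma sym_dot:
  fixes M :: "real^'n^'n"
  assumes "sym_mat M"
  shows "(M *v u) \<bullet> v = u \<bullet> (M *v v)"
proof -
  have "u \<bullet> (M *v v) = (u v* M) \<bullet> v" by (simp add: dot_lmul_matrix)
  also have "u v* M = transpose M *v u" by simp
  also have "transpose M = M" using assms by (simp add: sym_mat_def)
  finally show ?thesis by simp
qed

lemma spectral_aux:
  fixes M :: "real^'n^'n"
  assumes sym: "sym_mat M"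
  shows "k \<le> CARD('n) \<Longrightarrow> \<exists>B. finite B \<and> card B = k \<and>
     (\<forall>b\<in>B. norm b = 1 \<and> M *v b = (b \<bullet> (M *v b)) *\<^sub>R b) \<and> pairwise orthogonal B"
proof (induction k)
  case 0
  then show ?case by (intro exI[of _ "{}"]) auto
next
  case (Suc k)
  then obtain B where fin: "finite B" and cB: "card B = k"
    and eig: "\<forall>b\<in>B. norm b = 1 \<and> M *v b = (b \<bullet> (M *v b)) *\<^sub>R b"
    and po: "pairwise orthogonal B" by auto
  have "dim B \<le> card B" using fin by (rule dim_le_card')
  then have "dim B < DIM(real^'n)" using cB Suc.prems by simp
  then obtain x0 :: "real^'n" where x0: "x0 \<noteq> 0" and x0o: "\<And>y. y \<in> span B \<Longrightarrow> orthogonal x0 y"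
    by (rule orthogonal_to_subspace_exists) blast
  define W where "W = (\<Inter>b\<in>B. {v::real^'n. b \<bullet> v = 0})"
  have inW: "v \<in> W \<longleftrightarrow> (\<forall>b\<in>B. b \<bullet> v = 0)" for v by (auto simp: W_def)
  have closedW: "closed W" unfolding W_def
    by (intro closed_INT ballI closed_hyperplane)
  define K where "K = sphere (0::real^'n) 1 \<inter> W"
  have compK: "compact K" unfolding K_def by (intro compact_Int_closed compact_sphere closedW)
  have x0W: "x0 \<in> W" using x0o by (auto simp: inW orthogonal_def inner_commute intro: span_base)
  have "x0 /\<^sub>R norm x0 \<in> K" using x0 x0W by (auto simp: K_def inW)
  then have Kne: "K \<noteq> {}" by auto
  have contq: "continuous_on K (\<lambda>v. v \<bullet> (M *v v))"
    by (intro continuous_intros matrix_vector_mult_linear_continuous_on)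
  obtain v0 where v0K: "v0 \<in> K" and v0max: "\<And>y. y \<in> K \<Longrightarrow> y \<bullet> (M *v y) \<le> v0 \<bullet> (M *v v0)"
    using continuous_attains_sup[OF compK Kne contq] by blast
  define \<mu> where "\<mu> = v0 \<bullet> (M *v v0)"
  have v0W: "v0 \<in> W" and nv0: "norm v0 = 1" using v0K by (auto simp: K_def)
  have v0v0: "v0 \<bullet> v0 = 1" using nv0 by (simp add: norm_eq_1)
  have qle: "v \<bullet> (M *v v) \<le> \<mu> * (v \<bullet> v)" if "v \<in> W" for v
  proof (cases "v = 0")
    case True then show ?thesis by simp
  next
    case False
    have "v /\<^sub>R norm v \<in> K" using False that by (auto simp: K_def inW)
    then have "(v /\<^sub>R norm v) \<bullet> (M *v (v /\<^sub>R norm v)) \<le> \<mu>" using v0max \<mu>_def by blast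
    then have "(v \<bullet> (M *v v)) / (norm v)^2 \<le> \<mu>"
      by (simp add: matrix_vector_mult_scaleR power2_eq_square divide_inverse mult.commute mult.left_commute)
    then have "v \<bullet> (M *v v) \<le> \<mu> * (norm v)^2" using False by (simp add: divide_le_eq)
    then show ?thesis by (simp add: power2_norm_eq_inner)
  qed
  define r where "r = M *v v0 - \<mu> *\<^sub>R v0"
  have rW: "r \<in> W" unfolding inW
  proof
    fix b assume bB: "b \<in> B"
    have "b \<bullet> (M *v v0) = (M *v b) \<bullet> v0" using sym_dot[OF sym] by simp
    also have "\<dots> = 0" using eig bB v0W by (metis inW inner_scaleR_left mult_zero_right)
    finally show "b \<bullet> r = 0" using bB v0W by (simp add: r_def inW inner_diff_right)
  qed
  have rv0: "r \<bullet> v0 = 0"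
  proof -
    have "r \<bullet> v0 = (M *v v0) \<bullet> v0 - \<mu> * (v0 \<bullet> v0)" by (simp add: r_def inner_diff_left)
    also have "(M *v v0) \<bullet> v0 = \<mu>" by (simp add: \<mu>_def inner_commute)
    finally show ?thesis using v0v0 by simp
  qed
  have rMv0: "r \<bullet> (M *v v0) = r \<bullet> r" 
    using rv0 by (simp add: r_def inner_diff_left inner_diff_right inner_commute)
  define a where "a = r \<bullet> r"
  define C where "C = \<mu> * a - r \<bullet> (M *v r)"
  have key: "2 * t * a \<le> t^2 * C" for t
  proof -
    have "v0 + t *\<^sub>R r \<in> W" using v0W rW by (simp add: inW inner_add_right)
    from qle[OF this] have
      "(v0 + t *\<^sub>R r) \<bullet> (M *v (v0 + t *\<^sub>R r)) \<le> \<mu> * ((v0 + t *\<^sub>R r) \<bullet> (v0 + t *\<^sub>R r))" .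
    moreover have "v0 \<bullet> (M *v r) = r \<bullet> (M *v v0)"
      using sym_dot[OF sym, of v0 r] by (simp add: inner_commute)
    ultimately show ?thesis
      using rv0 v0v0 rMv0
      by (simp add: vec.add matrix_vector_mult_scaleR inner_add_left
          inner_add_right inner_commute \<mu>_def a_def C_def power2_eq_square algebra_simps)
  qed
  have "a = 0"
  proof (rule ccontr)
    assume "a \<noteq> 0"
    then have apos: "a > 0" using a_def by auto
    define t where "t = a / (\<bar>C\<bar> + 1)"
    have tpos: "t > 0" using apos by (simp add: t_def)
    from key[of t] have "2 * a \<le> t * C" using tpos by (simp add: power2_eq_square)
    also have "t * C \<le> t * \<bar>C\<bar>" using tpos by (intro mult_left_mono) auto
    also have "\<dots> < a" using apos by (simp add: t_def field_simps)
    finally show False using apos by simp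
  qed
  then have "r = 0" by (simp add: a_def)
  then have eig0: "M *v v0 = \<mu> *\<^sub>R v0" by (simp add: r_def)
  have v0notB: "v0 \<notin> B" using v0W v0v0 inW by auto
  show ?case
  proof (intro exI[of _ "insert v0 B"] conjI)
    show "finite (insert v0 B)" using fin by simp
    show "card (insert v0 B) = Suc k" using fin cB v0notB by simp
    show "\<forall>b\<in>insert v0 B. norm b = 1 \<and> M *v b = (b \<bullet> (M *v b)) *\<^sub>R b"
      using eig nv0 eig0 \<mu>_def by auto
    show "pairwise orthogonal (insert v0 B)"
      using po v0W inW by (auto simp: pairwise_insert orthogonal_def inner_commute)
  qed
qed

lemma orthonormal_collapse:
  fixes B :: "(real^'n) set"
  assumes fin: "finite B" and nb: "\<forall>b\<in>B. norm b = 1" and po: "pairwise orthogonal B" and b: "b \<in> B"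
  shows "b \<bullet> (\<Sum>c\<in>B. f c *\<^sub>R c) = f b"
proof -
  have "b \<bullet> (\<Sum>c\<in>B. f c *\<^sub>R c) = (\<Sum>c\<in>B. f c * (b \<bullet> c))" by (simp add: inner_sum_right)
  also have "\<dots> = (\<Sum>c\<in>B. if c = b then f c else 0)"
  proof (rule sum.cong)
    fix c assume c: "c \<in> B"
    show "f c * (b \<bullet> c) = (if c = b then f c else 0)"
    proof (cases "c = b")
      case True then show ?thesis using nb b by (simp add: norm_eq_1)
    next
      case False then show ?thesis using po b c by (simp add: pairwise_def orthogonal_def)
    qed
  qed simp
  also have "\<dots> = f b" using fin b by simp
  finally show ?thesis .
qed

lemma spectral:
  fixes M :: "real^'n^'n"
  assumes sym: "sym_mat M"
  obtains B where "finite B" "\<forall>b\<in>B. norm b = 1 \<and> M *v b = (b \<bullet> (M *v b)) *\<^sub>R b"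
    "pairwise orthogonal B" "\<And>x. x = (\<Sum>b\<in>B. (b \<bullet> x) *\<^sub>R b)"
proof -
  obtain B where fin: "finite B" and cB: "card B = CARD('n)"
    and eig: "\<forall>b\<in>B. norm b = 1 \<and> M *v b = (b \<bullet> (M *v b)) *\<^sub>R b"
    and po: "pairwise orthogonal B" using spectral_aux[OF sym, of "CARD('n)"] by auto
  have exp: "x = (\<Sum>b\<in>B. (b \<bullet> x) *\<^sub>R b)" for x
  proof (rule ccontr)
    assume ne: "x \<noteq> (\<Sum>b\<in>B. (b \<bullet> x) *\<^sub>R b)"
    define r where "r = x - (\<Sum>b\<in>B. (b \<bullet> x) *\<^sub>R b)"
    have r0: "r \<noteq> 0" using ne by (simp add: r_def)
    have rb: "b \<bullet> r = 0" if "b \<in> B" for b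
      using orthonormal_collapse[OF fin _ po that, of "\<lambda>b. b \<bullet> x"] eig
      by (simp add: r_def inner_diff_right)
    define u where "u = r /\<^sub>R norm r"
    have "norm u = 1" using r0 by (simp add: u_def)
    then have nu: "u \<bullet> u = 1" by (simp add: norm_eq_1)
    have ub: "b \<bullet> u = 0" if "b \<in> B" for b using rb[OF that] by (simp add: u_def)
    have uB: "u \<notin> B" using ub nu by auto
    have "pairwise orthogonal (insert u B)"
      using po ub by (auto simp: pairwise_insert orthogonal_def inner_commute)
    moreover have "0 \<notin> insert u B" using nu eig by auto
    ultimately have "independent (insert u B)" by (rule pairwise_orthogonal_independent)
    from independent_bound[OF this] have "card (insert u B) \<le> CARD('n)" by simp
    then show False using fin cB uB by simp
  qed
  show ?thesis using that fin eig po exp by blast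
qed

definition outer_sum :: "(real^'n) set \<Rightarrow> (real^'n \<Rightarrow> real) \<Rightarrow> real^'n^'n" where
  "outer_sum B c = (\<chi> i j. \<Sum>b\<in>B. c b * b$i * b$j)"

lemma outer_sum_mult: "finite B \<Longrightarrow> outer_sum B c *v x = (\<Sum>b\<in>B. (c b * (b \<bullet> x)) *\<^sub>R b)"
  apply (simp add: outer_sum_def vec_eq_iff matrix_vector_mult_def inner_vec_def)
  apply (simp add: sum_distrib_left sum_distrib_right)
  apply (subst sum.swap) apply (simp add: mult_ac)
  done

lemma sqrt_exists:
  fixes M :: "real^'n^'n"
  assumes pd: "pos_def M"
  shows "\<exists>S. pos_def S \<and> S ** S = M"
proof -
  have sym: "sym_mat M" using pd by (simp add: pos_def_def)
  obtain B where fin: "finite B" and eig: "\<forall>b\<in>B. norm b = 1 \<and> M *v b = (b \<bullet> (M *v b)) *\<^sub>R b"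
    and po: "pairwise orthogonal B" and exp: "\<And>x. x = (\<Sum>b\<in>B. (b \<bullet> x) *\<^sub>R b)"
    using spectral[OF sym] by blast
  define \<mu> where "\<mu> b = b \<bullet> (M *v b)" for b
  have nb: "\<forall>b\<in>B. norm b = 1" using eig by auto
  have mupos: "\<mu> b > 0" if "b \<in> B" for b
    using pd that nb unfolding pos_def_def \<mu>_def by (metis norm_zero zero_neq_one)
  define S where "S = outer_sum B (\<lambda>b. sqrt (\<mu> b))"
  have Sx: "S *v x = (\<Sum>b\<in>B. (sqrt (\<mu> b) * (b \<bullet> x)) *\<^sub>R b)" for x
    using fin by (simp add: S_def outer_sum_mult)
  have Mx: "M *v x = (\<Sum>b\<in>B. (\<mu> b * (b \<bullet> x)) *\<^sub>R b)" for x
  proof -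
    have "M *v x = M *v (\<Sum>b\<in>B. (b \<bullet> x) *\<^sub>R b)" using exp[of x] by simp
    also have "\<dots> = (\<Sum>b\<in>B. (b \<bullet> x) *\<^sub>R (M *v b))" by (simp add: vec.sum matrix_vector_mult_scaleR)
    also have "\<dots> = (\<Sum>b\<in>B. (\<mu> b * (b \<bullet> x)) *\<^sub>R b)"
    proof (rule sum.cong)
      fix b assume "b \<in> B"
      then have "M *v b = \<mu> b *\<^sub>R b" using eig by (simp add: \<mu>_def)
      then show "(b \<bullet> x) *\<^sub>R (M *v b) = (\<mu> b * (b \<bullet> x)) *\<^sub>R b" by (simp add: mult.commute)
    qed simp
    finally show ?thesis .
  qed
  have SS: "S ** S = M"
  proof (subst matrix_eq, intro allI)
    fix x
    have "(S ** S) *v x = S *v (S *v x)" by (simp add: matrix_vector_mul_assoc)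
    also have "\<dots> = (\<Sum>b\<in>B. (sqrt (\<mu> b) * (b \<bullet> (S *v x))) *\<^sub>R b)" by (rule Sx)
    also have "\<dots> = (\<Sum>b\<in>B. (\<mu> b * (b \<bullet> x)) *\<^sub>R b)"
    proof (rule sum.cong)
      fix b assume b: "b \<in> B"
      have "b \<bullet> (S *v x) = sqrt (\<mu> b) * (b \<bullet> x)"
        unfolding Sx by (rule orthonormal_collapse[OF fin nb po b])
      then show "(sqrt (\<mu> b) * (b \<bullet> (S *v x))) *\<^sub>R b = (\<mu> b * (b \<bullet> x)) *\<^sub>R b"
        using mupos[OF b] by (simp add: mult.assoc[symmetric])
    qed simp
    also have "\<dots> = M *v x" by (simp add: Mx)
    finally show "(S ** S) *v x = M *v x" .
  qed
  have symS: "sym_mat S"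
    by (simp add: sym_mat_def S_def outer_sum_def transpose_def vec_eq_iff mult_ac)
  have posS: "v \<bullet> (S *v v) > 0" if "v \<noteq> 0" for v
  proof -
    have "\<exists>b\<in>B. b \<bullet> v \<noteq> 0"
    proof (rule ccontr)
      assume "\<not> ?thesis"
      then have "v = (\<Sum>b\<in>B. 0 *\<^sub>R b)" using exp[of v] by (metis (no_types, lifting) sum.cong)
      then show False using that by simp
    qed
    then obtain b0 where b0: "b0 \<in> B" "b0 \<bullet> v \<noteq> 0" by blast
    have "v \<bullet> (S *v v) = (\<Sum>b\<in>B. sqrt (\<mu> b) * (b \<bullet> v)^2)"
      by (simp add: Sx inner_sum_right power2_eq_square inner_commute mult_ac)
    also have "\<dots> > 0"
    proof (rule sum_pos2[OF fin b0(1)])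
      show "0 < sqrt (\<mu> b0) * (b0 \<bullet> v)\<^sup>2" using mupos[OF b0(1)] b0(2) by simp
      show "\<And>i. i \<in> B \<Longrightarrow> 0 \<le> sqrt (\<mu> i) * (i \<bullet> v)\<^sup>2" using mupos by (simp add: less_imp_le)
    qed
    finally show ?thesis .
  qed
  show ?thesis using SS symS posS by (auto simp: pos_def_def)
qed

lemma trace_quad:
  fixes D S :: "real^'n^'n"
  assumes "sym_mat D"
  shows "trace (D ** S ** D) = (\<Sum>j\<in>UNIV. (D$j) \<bullet> (S *v (D$j)))"
proof -
  have DT: "D$k$j = D$j$k" for j k using assms
    unfolding sym_mat_def transpose_def by (metis vec_lambda_beta)
  show ?thesis
    apply (simp add: trace_def matrix_matrix_mult_def matrix_vector_mult_def inner_vec_def)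
    apply (simp add: sum_distrib_left sum_distrib_right)
    apply (rule sum.cong, simp)
    apply (subst sum.swap) 
    apply (rule sum.cong, simp) apply (rule sum.cong, simp)
    apply (rename_tac x a b, subst DT[of x b], simp)
    done
qed

lemma mm_diff_l: "(A::real^'n^'n) ** (B - C) = A ** B - A ** C"
  by (simp add: matrix_matrix_mult_def vec_eq_iff sum_subtractf algebra_simps)

lemma mm_diff_r: "((A::real^'n^'m) - B) ** (C::real^'p^'n) = A ** C - B ** C"
  by (simp add: matrix_matrix_mult_def vec_eq_iff sum_subtractf algebra_simps)

lemma sqrt_unique:
  fixes S1 S2 :: "real^'n^'n"
  assumes p1: "pos_def S1" and p2: "pos_def S2" and eq: "S1 ** S1 = S2 ** S2"
  shows "S1 = S2"
proof -
  define D where "D = S1 - S2"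
  have t1: "transpose S1 = S1" "transpose S2 = S2" using p1 p2 by (auto simp: pos_def_def sym_mat_def)
  have symD: "sym_mat D" unfolding sym_mat_def D_def
    using t1 unfolding transpose_def by (simp add: vec_eq_iff)
  have "S1 ** D + D ** S2 = S1 ** S1 - S2 ** S2"
    by (simp add: D_def mm_diff_l mm_diff_r)
  then have "S1 ** D + D ** S2 = 0" using eq by simp
  then have "D ** (S1 ** D + D ** S2) = 0" by simp
  then have "D ** S1 ** D + D ** (D ** S2) = 0" by (simp add: matrix_add_ldistrib matrix_mul_assoc)
  then have "trace (D ** S1 ** D + D ** (D ** S2)) = 0" by (simp add: trace_def)
  then have "trace (D ** S1 ** D) + trace (D ** (D ** S2)) = 0" by (simp only: trace_add)
  then have "trace (D ** S1 ** D) + trace ((D ** S2) ** D) = 0" by (simp only: trace_mul_sym[of D])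
  then have tr: "trace (D ** S1 ** D) + trace (D ** S2 ** D) = 0" by (simp add: matrix_mul_assoc)
  have nn: "\<And>S v. pos_def (S::real^'n^'n) \<Longrightarrow> v \<bullet> (S *v v) \<ge> 0"
  proof -
    fix S :: "real^'n^'n" and v :: "real^'n" assume "pos_def S"
    then show "v \<bullet> (S *v v) \<ge> 0" unfolding pos_def_def
      by (cases "v = 0") (auto intro: less_imp_le)
  qed
  have t2: "trace (D ** S1 ** D) \<ge> 0" "trace (D ** S2 ** D) \<ge> 0"
    unfolding trace_quad[OF symD] using nn p1 p2 by (auto intro: sum_nonneg)
  then have "trace (D ** S1 ** D) = 0" using tr by linarith
  then have "(\<Sum>j\<in>UNIV. (D$j) \<bullet> (S1 *v (D$j))) = 0" by (simp add: trace_quad[OF symD])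
  moreover have "\<forall>j\<in>UNIV. (D$j) \<bullet> (S1 *v (D$j)) \<ge> 0" using nn p1 by blast
  ultimately have z: "\<forall>j\<in>UNIV. (D$j) \<bullet> (S1 *v (D$j)) = 0"
    using sum_nonneg_eq_0_iff[of UNIV "\<lambda>j. (D$j) \<bullet> (S1 *v (D$j))"] by simp
  have "D$j = 0" for j
  proof (rule ccontr)
    assume "D$j \<noteq> 0"
    then have "(D$j) \<bullet> (S1 *v (D$j)) > 0" using p1 unfolding pos_def_def by blast
    then show False using z by simp
  qed
  then have "D = 0" by (simp add: vec_eq_iff)
  then show ?thesis by (simp add: D_def)
qed

lemma mat_sqrt_prop:
  fixes R :: "real^'n^'n"
  assumes "pos_def R"
  shows "pos_def (mat_sqrt R) \<and> mat_sqrt R ** mat_sqrt R = R"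
proof -
  have "\<exists>!S. pos_def S \<and> S ** S = R"
    using sqrt_exists[OF assms] sqrt_unique by metis
  then show ?thesis unfolding mat_sqrt_def by (rule theI')
qed

lemma diag_mult: "diag_mat a ** diag_mat b = diag_mat (\<lambda>i. a i * b i)"
proof -
  have "(\<Sum>k\<in>UNIV. (if i = k then a i else 0) * (if k = j then b k else 0)) = (if i = j then a i * b i else 0)" for i j
  proof -
    have "(\<Sum>k\<in>UNIV. (if i = k then a i else 0) * (if k = j then b k else 0))
        = (\<Sum>k\<in>UNIV. if k = i then (if i = j then a i * b i else 0) else 0)"
      by (rule sum.cong) auto
    also have "\<dots> = (if i = j then a i * b i else 0)" by simp
    finally show ?thesis .
  qed
  then show ?thesis unfolding diag_mat_def matrix_matrix_mult_def by (simp add: vec_eq_iff)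
qed
lemma diag_vec: "diag_mat d *v v = (\<chi> i. d i * v$i)"
  unfolding diag_mat_def matrix_vector_mult_def
  apply (simp add: vec_eq_iff)
  apply (intro allI)
  apply (subst sum.remove[of UNIV i])
  apply auto
  done
lemma diag_one: "diag_mat (\<lambda>i. 1) = mat 1"
  by (simp add: diag_mat_def mat_def)
lemma diag_scale: "c *\<^sub>R diag_mat d = diag_mat (\<lambda>i. c * d i)"
  by (simp add: diag_mat_def vec_eq_iff)
lemma EdF_entry: "(E ** diag_mat d ** F) $ p $ q = (\<Sum>k\<in>UNIV. E$p$k * d k * F$k$q)"
  unfolding diag_mat_def matrix_matrix_mult_def
  apply simp
  apply (rule sum.cong, simp)
  apply (subst sum.remove[of UNIV], auto)
  done
definition Nmat :: "real^'nz^'nx \<Rightarrow> real^'nx^'nz \<Rightarrow> 'nz \<Rightarrow> real^'nx^'nx" where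
  "Nmat E F i = E ** diag_mat (\<lambda>j. if j = i then 1 else 0) ** F"
lemma EdF_sum: "E ** diag_mat d ** F = (\<Sum>i\<in>UNIV. d i *\<^sub>R Nmat E F i)"
proof -
  have "(\<Sum>i\<in>UNIV. d i * (\<Sum>k\<in>UNIV. E$p$k * (if k = i then 1 else 0) * F$k$q))
      = (\<Sum>k\<in>UNIV. E$p$k * d k * F$k$q)" for p q
  proof -
    have "(\<Sum>i\<in>UNIV. d i * (\<Sum>k\<in>UNIV. E$p$k * (if k = i then 1 else 0) * F$k$q))
       = (\<Sum>i\<in>UNIV. d i * (E$p$i * F$i$q))"
    proof (rule sum.cong)
      fix i
      have "(\<Sum>k\<in>UNIV. E$p$k * (if k = i then 1 else 0) * F$k$q) = (\<Sum>k\<in>UNIV. if k = i then E$p$i * F$i$q else 0)"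
        by (rule sum.cong) auto
      then show "d i * (\<Sum>k\<in>UNIV. E$p$k * (if k = i then 1 else 0) * F$k$q) = d i * (E$p$i * F$i$q)" by simp
    qed simp
    then show ?thesis by (simp add: mult_ac)
  qed
  then show ?thesis by (simp add: vec_eq_iff Nmat_def EdF_entry sum_component)
qed

lemma matrix_inv_eq:
  fixes A B :: "real^'n^'n"
  assumes "A ** B = mat 1"
  shows "matrix_inv A = B"
proof -
  have BA: "B ** A = mat 1" using assms matrix_left_right_inverse by blast
  have "\<exists>A'. A ** A' = mat 1 \<and> A' ** A = mat 1" using assms BA by blast
  then have C: "A ** matrix_inv A = mat 1 \<and> matrix_inv A ** A = mat 1"
    unfolding matrix_inv_def by (rule someI_ex)
  have "matrix_inv A = matrix_inv A ** (A ** B)" using assms by simp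
  also have "\<dots> = (matrix_inv A ** A) ** B" by (simp add: matrix_mul_assoc)
  also have "\<dots> = B" using C by simp
  finally show ?thesis .
qed

lemma mm_add_r: "((B::real^'n^'m) + C) ** (A::real^'p^'n) = B ** A + C ** A"
  by (simp add: matrix_matrix_mult_def vec_eq_iff sum.distrib algebra_simps)
lemma mm_scale_r: "(A::real^'n^'m) ** (t *\<^sub>R B) = t *\<^sub>R (A ** (B::real^'p^'n))"
  by (simp add: matrix_matrix_mult_def vec_eq_iff sum_distrib_left algebra_simps)
lemma mm_scale_l: "(t *\<^sub>R A) ** (B::real^'p^'n) = t *\<^sub>R ((A::real^'n^'m) ** B)"
  by (simp add: matrix_matrix_mult_def vec_eq_iff sum_distrib_left algebra_simps)
lemma gen3: "(A::real^'n^'m) ** ((B::real^'k^'n) + t *\<^sub>R C) ** (D::real^'p^'k) = A ** B ** D + t *\<^sub>R (A ** C ** D)"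
  by (simp only: matrix_add_ldistrib mm_add_r mm_scale_r mm_scale_l)

locale kf =
  fixes P :: "real^'nx^'nx" and R :: "real^'nz^'nz" and H :: "real^'nx^'nz"
    and V :: "real^'nz^'nz" and \<alpha> :: "'nz \<Rightarrow> real"
  assumes R_pd: "pos_def R" and V_orth: "orthogonal_matrix V"
    and D_eig: "mat_inv_sqrt R ** H ** P ** transpose H ** mat_inv_sqrt R
                  = V ** diag_mat \<alpha> ** transpose V"
    and \<alpha>_pos: "\<And>i. \<alpha> i > 0"
begin

abbreviation "SS \<equiv> mat_sqrt R"
abbreviation "TT \<equiv> mat_inv_sqrt R"
abbreviation "EE \<equiv> P ** transpose H ** TT ** V"
abbreviation "FF \<equiv> transpose V ** TT ** H"

lemma SSR: "SS ** SS = R" and pS: "pos_def SS" using mat_sqrt_prop[OF R_pd] by auto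

lemma ST: "SS ** TT = mat 1" and TS: "TT ** SS = mat 1"
proof -
  have "\<forall>x. SS *v x = 0 \<longrightarrow> x = 0"
  proof (intro allI impI)
    fix x assume "SS *v x = 0"
    then have "x \<bullet> (SS *v x) = 0" by simp
    then show "x = 0" using pS unfolding pos_def_def by (metis less_irrefl)
  qed
  then obtain B where B: "B ** SS = mat 1" using matrix_left_invertible_ker by blast
  then have B2: "SS ** B = mat 1" using matrix_left_right_inverse by blast
  have "TT = B" unfolding mat_inv_sqrt_def by (rule matrix_inv_eq[OF B2])
  then show "SS ** TT = mat 1" "TT ** SS = mat 1" using B B2 by auto
qed

lemma VV: "transpose V ** V = mat 1" "V ** transpose V = mat 1"
  using V_orth by (auto simp: orthogonal_matrix_def)

lemma FE: "FF ** EE = diag_mat \<alpha>"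
proof -
  have "FF ** EE = transpose V ** (TT ** H ** P ** transpose H ** TT) ** V"
    by (simp add: matrix_mul_assoc)
  also have "\<dots> = (transpose V ** V) ** diag_mat \<alpha> ** (transpose V ** V)"
    by (simp add: D_eig matrix_mul_assoc)
  also have "\<dots> = diag_mat \<alpha>" by (simp add: VV)
  finally show ?thesis .
qed

lemma A_eq:
  assumes t: "t \<ge> 0"
  shows "A_mat P H R t = EE ** diag_mat (\<lambda>i. -(1/2) / (1 + t * \<alpha> i)) ** FF"
proof -
  have pos: "1 + t * \<alpha> i > 0" for i using t \<alpha>_pos[of i] by (simp add: add_pos_nonneg)
  define D1 where "D1 = diag_mat (\<lambda>i. 1 + t * \<alpha> i)"
  define D2 where "D2 = diag_mat (\<lambda>i. 1 / (1 + t * \<alpha> i))"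
  have D12: "D1 ** D2 = mat 1"
    unfolding D1_def D2_def diag_mult using pos by (simp add: diag_one[symmetric] less_imp_neq[symmetric])
  have HPH: "H ** P ** transpose H = SS ** (V ** diag_mat \<alpha> ** transpose V) ** SS"
  proof -
    have "SS ** (V ** diag_mat \<alpha> ** transpose V) ** SS
        = (SS ** TT) ** (H ** P ** transpose H) ** (TT ** SS)"
      by (simp add: D_eig[symmetric] matrix_mul_assoc)
    then show ?thesis by (simp add: ST TS)
  qed
  have D1eq: "D1 = mat 1 + t *\<^sub>R diag_mat \<alpha>"
    by (simp add: D1_def diag_mat_def mat_def vec_eq_iff)
  have X: "t *\<^sub>R (H ** P ** transpose H) + R = SS ** (V ** D1 ** transpose V) ** SS"
  proof -
    have "V ** D1 ** transpose V = V ** transpose V + t *\<^sub>R (V ** diag_mat \<alpha> ** transpose V)"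
      unfolding D1eq gen3 by simp
    then have "SS ** (V ** D1 ** transpose V) ** SS
       = SS ** (V ** transpose V) ** SS + t *\<^sub>R (SS ** (V ** diag_mat \<alpha> ** transpose V) ** SS)"
      by (simp only: gen3)
    also have "\<dots> = R + t *\<^sub>R (H ** P ** transpose H)" by (simp add: VV SSR HPH)
    finally show ?thesis by simp
  qed
  define Y where "Y = TT ** V ** D2 ** transpose V ** TT"
  have XY: "(SS ** (V ** D1 ** transpose V) ** SS) ** Y = mat 1"
  proof -
    have "(SS ** (V ** D1 ** transpose V) ** SS) ** Y
       = SS ** V ** D1 ** (transpose V ** (SS ** TT) ** V) ** D2 ** transpose V ** TT"
      by (simp only: Y_def matrix_mul_assoc)
    also have "\<dots> = SS ** V ** D1 ** (transpose V ** V) ** D2 ** transpose V ** TT"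
      by (simp only: ST matrix_mul_rid)
    also have "\<dots> = SS ** V ** (D1 ** D2) ** transpose V ** TT"
      by (simp only: VV matrix_mul_rid matrix_mul_assoc)
    also have "\<dots> = SS ** (V ** transpose V) ** TT" by (simp only: D12 matrix_mul_rid matrix_mul_assoc)
    also have "\<dots> = mat 1" by (simp only: VV matrix_mul_rid ST)
    finally show ?thesis .
  qed
  have inv: "matrix_inv (t *\<^sub>R (H ** P ** transpose H) + R) = Y"
    unfolding X by (rule matrix_inv_eq[OF XY])
  have "A_mat P H R t = (-(1/2)) *\<^sub>R (P ** transpose H ** Y ** H)"
    by (simp add: A_mat_def inv)
  also have "P ** transpose H ** Y ** H = EE ** D2 ** FF"
    by (simp only: Y_def matrix_mul_assoc)
  also have "(-(1/2)) *\<^sub>R (EE ** D2 ** FF) = EE ** ((-(1/2)) *\<^sub>R D2) ** FF"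
    by (simp only: mm_scale_l mm_scale_r)
  also have "(-(1/2)) *\<^sub>R D2 = diag_mat (\<lambda>i. -(1/2) / (1 + t * \<alpha> i))"
    by (simp add: D2_def diag_scale)
  finally show ?thesis .
qed

lemma Rinv: "matrix_inv R = TT ** TT"
proof -
  have "R ** (TT ** TT) = (SS ** SS) ** (TT ** TT)" by (simp only: SSR)
  also have "\<dots> = SS ** (SS ** TT) ** TT" by (simp only: matrix_mul_assoc)
  also have "\<dots> = mat 1" by (simp add: ST)
  finally show ?thesis by (rule matrix_inv_eq)
qed

lemma zeq: "P ** transpose H ** matrix_inv R *v z = EE *v (transpose V ** TT *v z)"
proof -
  have "EE *v (transpose V ** TT *v z) = (P ** transpose H ** TT ** (V ** transpose V) ** TT) *v z"
    by (simp add: matrix_vector_mul_assoc matrix_mul_assoc)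
  also have "\<dots> = P ** transpose H ** matrix_inv R *v z" by (simp add: VV Rinv matrix_mul_assoc)
  finally show ?thesis by simp
qed

lemma EdF_x: "(EE ** diag_mat d ** FF) *v v = EE *v (\<chi> i. d i * (FF *v v)$i)"
  by (simp add: matrix_vector_mul_assoc[symmetric] diag_vec)

lemma EdF_E: "(EE ** diag_mat d ** FF) *v (EE *v w) = EE *v (\<chi> i. d i * \<alpha> i * w$i)"
proof -
  have "FF *v (EE *v w) = (\<chi> i. \<alpha> i * w$i)"
    by (simp add: matrix_vector_mul_assoc FE diag_vec)
  then show ?thesis by (simp add: EdF_x mult.assoc)
qed

end

lemma scal:
  fixes al l0 l1 y0 y1 zt xt :: real
  assumes al: "al > 0" and l0: "l0 \<ge> 0" and l1: "l1 \<ge> 0"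
  and u: "sqrt (1 + l1*al) * y1 - (zt * (sqrt (1 + l1*al) - 1 / sqrt (1 + l1*al)) + xt / sqrt (1 + l1*al))
        = sqrt (1 + l0*al) * y0 - (zt * (sqrt (1 + l0*al) - 1 / sqrt (1 + l0*al)) + xt / sqrt (1 + l0*al))"
  shows "(y1 - y0) / al = ((sqrt (1 + l0*al) / sqrt (1 + l1*al) - 1) / al) * y0
     + (al * zt * (l1 * sqrt (1 + l0*al) - l0 * sqrt (1 + l1*al)) + xt * (sqrt (1 + l0*al) - sqrt (1 + l1*al)))
       / (al * (sqrt (1 + l1*al))^2 * sqrt (1 + l0*al))"
proof -
  define s0 where "s0 = sqrt (1 + l0*al)"
  define s1 where "s1 = sqrt (1 + l1*al)"
  have p0: "s0 > 0" and p1: "s1 > 0" using al l0 l1 by (auto simp: s0_def s1_def add_pos_nonneg)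
  have q0: "s0^2 = 1 + l0*al" and q1: "s1^2 = 1 + l1*al" using al l0 l1 by (auto simp: s0_def s1_def add_nonneg_nonneg)
  have L0: "l0 = (s0^2 - 1)/al" and L1: "l1 = (s1^2 - 1)/al" using q0 q1 al by (auto simp: field_simps)
  have u': "s1 * y1 - (zt * (s1 - 1 / s1) + xt / s1) = s0 * y0 - (zt * (s0 - 1 / s0) + xt / s0)"
    using u by (simp add: s0_def s1_def)
  then have y1: "y1 = (s0 * y0 - (zt * (s0 - 1 / s0) + xt / s0) + (zt * (s1 - 1 / s1) + xt / s1)) / s1"
    using p1 by (simp add: field_simps)
  show ?thesis
    unfolding s0_def[symmetric] s1_def[symmetric] y1 L0 L1
    using p0 p1 al by (simp add: field_simps) (simp add: algebra_simps power2_eq_square)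
qed

lemma sqrt_deriv:
  assumes "1 + t * al > (0::real)"
  shows "((\<lambda>t. sqrt (1 + t * al)) has_real_derivative al / (2 * sqrt (1 + t * al))) (at t within S)"
proof -
  have "((\<lambda>t. sqrt (1 + t * al)) has_real_derivative inverse (sqrt (1 + t * al)) / 2 * (0 + 1 * al)) (at t within S)"
    by (rule DERIV_chain2[where f=sqrt], rule DERIV_real_sqrt[OF assms], auto intro!: derivative_eq_intros)
  then show ?thesis by (simp add: field_simps)
qed

lemma u_deriv:
  fixes al t zt xt :: real
  assumes al: "al > 0" and t: "t \<ge> 0"
    and dy: "(y has_real_derivative al * ((-(1/2)/(1+t*al)) * y t
         + (1 + 2*t*(-(1/2)/(1+t*al))*al) * ((1 + t*(-(1/2)/(1+t*al))*al) * zt + (-(1/2)/(1+t*al))*xt))) (at t within S)"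
  shows "((\<lambda>t. sqrt (1 + t * al) * y t - (zt * (sqrt (1 + t*al) - 1 / sqrt (1 + t*al)) + xt / sqrt (1 + t*al)))
      has_real_derivative 0) (at t within S)"
proof -
  define s where "s = sqrt (1 + t * al)"
  have pos: "1 + t * al > 0" using al t by (simp add: add_pos_nonneg)
  have sp: "s > 0" using pos by (simp add: s_def)
  have s2: "s^2 = 1 + t * al" using pos by (simp add: s_def)
  have h1: "1 + 2 * t * (-(1/2)/s^2) * al = 1/s^2" unfolding s2 using pos by (simp add: field_simps)
  have h2: "1 + t * (-(1/2)/s^2) * al = (s^2+1)/(2 * s^2)" unfolding s2 using pos by (simp add: field_simps)
  have h3: "-(1/2)/(1+t*al) = -(1/2)/s^2" unfolding s2 by simp
  define g where "g = (\<lambda>t. sqrt (1 + t * al))"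
  have gt: "g t = s" by (simp add: g_def s_def)
  have gne: "g t \<noteq> 0" using sp gt by simp
  have ds: "(g has_real_derivative al / (2 * s)) (at t within S)"
    using sqrt_deriv[OF pos] by (simp add: s_def g_def)
  have dy': "(y has_real_derivative al * ((-(1/2)/s^2) * y t
         + (1/s^2) * ((s^2+1)/(2 * s^2) * zt + (-(1/2)/s^2)*xt))) (at t within S)"
    using dy unfolding h3 unfolding h1 h2 .
  have fe: "(\<lambda>t. sqrt (1 + t * al) * y t - (zt * (sqrt (1 + t*al) - 1 / sqrt (1 + t*al)) + xt / sqrt (1 + t*al)))
     = (\<lambda>t. g t * y t - (zt * (g t - 1 / g t) + xt / g t))" by (simp add: g_def)
  have "((\<lambda>t. g t * y t - (zt * (g t - 1 / g t) + xt / g t))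
      has_real_derivative
       (al / (2 * s) * y t + s * (al * ((-(1/2)/s^2) * y t
         + (1/s^2) * ((s^2+1)/(2 * s^2) * zt + (-(1/2)/s^2)*xt)))
        - (zt * (al / (2 * s) - (- (al / (2 * s)) / s^2)) + - (xt * (al / (2 * s))) / s^2))) (at t within S)"
    apply (rule derivative_eq_intros ds dy' refl | simp add: gne)+
    apply (simp add: gt power2_eq_square)
    done
  moreover have "(al / (2 * s) * y t + s * (al * ((-(1/2)/s^2) * y t
         + (1/s^2) * ((s^2+1)/(2* s^2) * zt + (-(1/2)/s^2)*xt)))
        - (zt * (al / (2 * s) - (- (al / (2 * s)) / s^2)) + - (xt * (al / (2 * s))) / s^2)) = 0"
    using sp by (simp add: field_simps) algebra
  ultimately show ?thesis unfolding fe by simp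
qed

lemma deriv_const:
  fixes f :: "real \<Rightarrow> 'a::banach"
  assumes ab: "a \<le> b" and d: "\<And>t. t \<in> {a..b} \<Longrightarrow> (f has_vector_derivative 0) (at t within {a..b})"
  shows "f b = f a"
proof -
  have "((\<lambda>t. 0) has_integral f b - f a) {a..b}"
    using fundamental_theorem_of_calculus[OF ab d] by simp
  then show ?thesis by simp
qed

lemma lin1: "(mat 1 + c *\<^sub>R M) *v v = v + c *\<^sub>R (M *v (v::real^'n))"
  by (simp add: matrix_vector_mult_add_rdistrib scaleR_matrix_vector_assoc)

context kf
begin

lemma combine: "EE *v u + c *\<^sub>R (EE *v u') = EE *v (u + c *\<^sub>R u')"
  by (simp add: vec.add matrix_vector_mult_scaleR)

lemma b_eq:
  assumes t: "t \<ge> 0"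
  shows "b_vec P H R xbar z t = EE *v (\<chi> i.
     (1 + 2 * t * (-(1/2)/(1+t*\<alpha> i)) * \<alpha> i) *
       ((1 + t * (-(1/2)/(1+t*\<alpha> i)) * \<alpha> i) * (transpose V ** TT *v z)$i
        + (-(1/2)/(1+t*\<alpha> i)) * (FF *v xbar)$i))"
proof -
  define zt where "zt = transpose V ** TT *v z"
  define a where "a i = -(1/2)/(1+t*\<alpha> i)" for i
  define Am where "Am = EE ** diag_mat a ** FF"
  have Aeq: "A_mat P H R t = Am" unfolding Am_def a_def by (rule A_eq[OF t])
  have s1: "(mat 1 + t *\<^sub>R Am) *v (EE *v zt) = EE *v (\<chi> i. (1 + t * a i * \<alpha> i) * zt$i)"
  proof -
    have "(mat 1 + t *\<^sub>R Am) *v (EE *v zt) = EE *v (zt + t *\<^sub>R (\<chi> i. a i * \<alpha> i * zt$i))"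
      unfolding lin1 Am_def EdF_E by (rule combine)
    also have "zt + t *\<^sub>R (\<chi> i. a i * \<alpha> i * zt$i) = (\<chi> i. (1 + t * a i * \<alpha> i) * zt$i)"
      by (simp add: vec_eq_iff algebra_simps)
    finally show ?thesis .
  qed
  have s2: "Am *v xbar = EE *v (\<chi> i. a i * (FF *v xbar)$i)" unfolding Am_def by (rule EdF_x)
  have s3: "EE *v (\<chi> i. (1 + t * a i * \<alpha> i) * zt$i) + EE *v (\<chi> i. a i * (FF *v xbar)$i)
      = EE *v (\<chi> i. (1 + t * a i * \<alpha> i) * zt$i + a i * (FF *v xbar)$i)"
  proof -
    have "(\<chi> i. (1 + t * a i * \<alpha> i) * zt$i) + (\<chi> i. a i * (FF *v xbar)$i)
       = (\<chi> i. (1 + t * a i * \<alpha> i) * zt$i + a i * (FF *v xbar)$i)" by (simp add: vec_eq_iff)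
    then show ?thesis by (simp only: vec.add[symmetric])
  qed
  have s4: "(mat 1 + (2 * t) *\<^sub>R Am) *v (EE *v (\<chi> i. (1 + t * a i * \<alpha> i) * zt$i + a i * (FF *v xbar)$i))
     = EE *v (\<chi> i. (1 + 2 * t * a i * \<alpha> i) * ((1 + t * a i * \<alpha> i) * zt$i + a i * (FF *v xbar)$i))"
  proof -
    let ?w = "\<chi> i. (1 + t * a i * \<alpha> i) * zt$i + a i * (FF *v xbar)$i"
    have "(mat 1 + (2 * t) *\<^sub>R Am) *v (EE *v ?w) = EE *v (?w + (2 * t) *\<^sub>R (\<chi> i. a i * \<alpha> i * ?w$i))"
      unfolding lin1 Am_def EdF_E by (rule combine)
    also have "?w + (2 * t) *\<^sub>R (\<chi> i. a i * \<alpha> i * ?w$i)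
       = (\<chi> i. (1 + 2 * t * a i * \<alpha> i) * ((1 + t * a i * \<alpha> i) * zt$i + a i * (FF *v xbar)$i))"
      by (simp add: vec_eq_iff algebra_simps)
    finally show ?thesis .
  qed
  show ?thesis
    unfolding b_vec_def Aeq zeq zt_def[symmetric] s1 s2 s3 s4 by (simp add: a_def)
qed

end

context kf
begin

lemma ode_sol:
  fixes x :: "real \<Rightarrow> real^'nx" and xbar :: "real^'nx" and z :: "real^'nz"
  assumes l0: "0 \<le> l0" and l01: "l0 < l1"
    and ode: "\<And>l. l \<in> {l0..l1} \<Longrightarrow>
       (x has_vector_derivative (A_mat P H R l *v x l + b_vec P H R xbar z l)) (at l within {l0..l1})"
  shows "x l1 = (mat 1 + EE ** diag_mat (\<lambda>i. (sqrt (1 + l0 * \<alpha> i) / sqrt (1 + l1 * \<alpha> i) - 1) / \<alpha> i) ** FF) *v x l0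
     + EE *v (\<chi> i. (\<alpha> i * (transpose V ** TT *v z)$i * (l1 * sqrt (1 + l0 * \<alpha> i) - l0 * sqrt (1 + l1 * \<alpha> i))
          + (FF *v xbar)$i * (sqrt (1 + l0 * \<alpha> i) - sqrt (1 + l1 * \<alpha> i)))
          / (\<alpha> i * (sqrt (1 + l1 * \<alpha> i))\<^sup>2 * sqrt (1 + l0 * \<alpha> i)))"
proof -
  define zt where "zt = transpose V ** TT *v z"
  define xt where "xt = FF *v xbar"
  define a where "a t i = -(1/2)/(1+t*\<alpha> i)" for t i
  define \<beta> where "\<beta> t i = (1 + 2 * t * a t i * \<alpha> i) * ((1 + t * a t i * \<alpha> i) * zt$i + a t i * xt$i)" for t i
  define y where "y t = FF *v x t" for t
  define \<phi> where "\<phi> t = (\<chi> i. a t i * (y t)$i + \<beta> t i)" for t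
  let ?I = "{l0..l1}"
  have tI: "t \<ge> 0" if "t \<in> ?I" for t using that l0 by auto
  have xder: "(x has_vector_derivative EE *v \<phi> t) (at t within ?I)" if t: "t \<in> ?I" for t
  proof -
    have "A_mat P H R t *v x t = EE *v (\<chi> i. a t i * (y t)$i)"
      unfolding A_eq[OF tI[OF t]] EdF_x by (simp add: a_def y_def)
    moreover have "b_vec P H R xbar z t = EE *v (\<chi> i. \<beta> t i)"
      unfolding b_eq[OF tI[OF t]] by (simp add: \<beta>_def a_def zt_def xt_def)
    moreover have "EE *v (\<chi> i. a t i * (y t)$i) + EE *v (\<chi> i. \<beta> t i) = EE *v \<phi> t"
    proof -
      have "(\<chi> i. a t i * (y t)$i) + (\<chi> i. \<beta> t i) = \<phi> t" by (simp add: vec_eq_iff \<phi>_def)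
      then show ?thesis by (simp only: vec.add[symmetric])
    qed
    ultimately show ?thesis using ode[OF t] by simp
  qed
  define L where "L = EE ** diag_mat (\<lambda>i. 1 / \<alpha> i) ** FF"
  have LE: "L ** EE = EE"
  proof -
    have "L ** EE = EE ** (diag_mat (\<lambda>i. 1 / \<alpha> i) ** (FF ** EE))" by (simp only: L_def matrix_mul_assoc)
    also have "\<dots> = EE ** diag_mat (\<lambda>i. 1)" using \<alpha>_pos
      by (simp add: FE diag_mult less_imp_neq[symmetric])
    finally show ?thesis by (simp add: diag_one)
  qed
  have MLz: "(mat 1 - L) ** EE = 0" by (simp add: mm_diff_r LE)
  have "(\<lambda>t. (mat 1 - L) *v x t) l1 = (\<lambda>t. (mat 1 - L) *v x t) l0"
  proof (rule deriv_const)
    show "l0 \<le> l1" using l01 by simp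
    fix t assume t: "t \<in> ?I"
    have "((\<lambda>t. (mat 1 - L) *v x t) has_vector_derivative (mat 1 - L) *v (EE *v \<phi> t)) (at t within ?I)"
      by (rule bounded_linear.has_vector_derivative[OF matrix_vector_mul_bounded_linear xder[OF t]])
    also have "(mat 1 - L) *v (EE *v \<phi> t) = 0" by (simp add: matrix_vector_mul_assoc MLz)
    finally show "((\<lambda>t. (mat 1 - L) *v x t) has_vector_derivative 0) (at t within ?I)" .
  qed
  then have "x l1 - x l0 = L *v (x l1 - x l0)"
    by (simp add: matrix_vector_mult_diff_rdistrib vec.diff algebra_simps)
  also have "\<dots> = EE *v (\<chi> i. (y l1 $ i - y l0 $ i) / \<alpha> i)"
    unfolding L_def EdF_x by (simp add: y_def vec.diff)
  finally have xw: "x l1 = x l0 + EE *v (\<chi> i. (y l1 $ i - y l0 $ i) / \<alpha> i)" by (simp add: algebra_simps)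
  have comp: "(y l1 $ i - y l0 $ i) / \<alpha> i =
      ((sqrt (1 + l0 * \<alpha> i) / sqrt (1 + l1 * \<alpha> i) - 1) / \<alpha> i) * y l0 $ i
     + (\<alpha> i * zt$i * (l1 * sqrt (1 + l0 * \<alpha> i) - l0 * sqrt (1 + l1 * \<alpha> i))
          + xt$i * (sqrt (1 + l0 * \<alpha> i) - sqrt (1 + l1 * \<alpha> i)))
          / (\<alpha> i * (sqrt (1 + l1 * \<alpha> i))\<^sup>2 * sqrt (1 + l0 * \<alpha> i))" for i
  proof (rule scal[OF \<alpha>_pos l0])
    show "0 \<le> l1" using l0 l01 by simp
    let ?u = "\<lambda>t. sqrt (1 + t * \<alpha> i) * y t $ i - (zt$i * (sqrt (1 + t * \<alpha> i) - 1 / sqrt (1 + t * \<alpha> i))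
                 + xt$i / sqrt (1 + t * \<alpha> i))"
    have "?u l1 = ?u l0"
    proof (rule deriv_const[where f="?u"])
      show "l0 \<le> l1" using l01 by simp
      fix t assume t: "t \<in> ?I"
      have dyv: "((\<lambda>t. y t $ i) has_vector_derivative (FF *v (EE *v \<phi> t)) $ i) (at t within ?I)"
        unfolding y_def
        by (rule bounded_linear.has_vector_derivative[OF
              bounded_linear_compose[OF bounded_linear_vec_nth matrix_vector_mul_bounded_linear] xder[OF t]])
      have "(FF *v (EE *v \<phi> t)) $ i = \<alpha> i * \<phi> t $ i"
        by (simp add: matrix_vector_mul_assoc FE diag_vec)
      with dyv have dy: "((\<lambda>t. y t $ i) has_real_derivative \<alpha> i * (a t i * y t $ i + \<beta> t i)) (at t within ?I)"
        by (simp add: has_real_derivative_iff_has_vector_derivative \<phi>_def)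
      have "(?u has_real_derivative 0) (at t within ?I)"
        by (rule u_deriv[OF \<alpha>_pos tI[OF t]]) (use dy in \<open>simp add: a_def \<beta>_def\<close>)
      then show "(?u has_vector_derivative 0) (at t within ?I)"
        by (simp add: has_real_derivative_iff_has_vector_derivative)
    qed
    then show "sqrt (1 + l1 * \<alpha> i) * y l1 $ i - (zt$i * (sqrt (1 + l1 * \<alpha> i) - 1 / sqrt (1 + l1 * \<alpha> i))
                 + xt$i / sqrt (1 + l1 * \<alpha> i)) =
        sqrt (1 + l0 * \<alpha> i) * y l0 $ i - (zt$i * (sqrt (1 + l0 * \<alpha> i) - 1 / sqrt (1 + l0 * \<alpha> i))
                 + xt$i / sqrt (1 + l0 * \<alpha> i))" by simp
  qed
  define \<Omega>d where "\<Omega>d i = (sqrt (1 + l0 * \<alpha> i) / sqrt (1 + l1 * \<alpha> i) - 1) / \<alpha> i" for i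
  define c where "c = (\<chi> i. (\<alpha> i * zt$i * (l1 * sqrt (1 + l0 * \<alpha> i) - l0 * sqrt (1 + l1 * \<alpha> i))
          + xt$i * (sqrt (1 + l0 * \<alpha> i) - sqrt (1 + l1 * \<alpha> i)))
          / (\<alpha> i * (sqrt (1 + l1 * \<alpha> i))\<^sup>2 * sqrt (1 + l0 * \<alpha> i)))"
  have "(mat 1 + EE ** diag_mat \<Omega>d ** FF) *v x l0 + EE *v c
      = x l0 + EE *v ((\<chi> i. \<Omega>d i * y l0 $ i) + c)"
    by (simp add: matrix_vector_mult_add_rdistrib EdF_x y_def vec.add)
  also have "(\<chi> i. \<Omega>d i * y l0 $ i) + c = (\<chi> i. (y l1 $ i - y l0 $ i) / \<alpha> i)"
    unfolding vec_eq_iff c_def \<Omega>d_def using comp by simp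
  finally show ?thesis using xw by (simp add: \<Omega>d_def c_def zt_def xt_def)
qed

end

lemma sqrt_exp_ln: "x > 0 \<Longrightarrow> sqrt x = exp (ln x / 2)"
  using powr_half_sqrt[of x] by (simp add: powr_def)

context kf
begin

lemma EdF_mult: "(EE ** diag_mat g ** FF) ** (EE ** diag_mat h ** FF) = EE ** diag_mat (\<lambda>i. g i * \<alpha> i * h i) ** FF"
proof -
  have "(EE ** diag_mat g ** FF) ** (EE ** diag_mat h ** FF) = EE ** (diag_mat g ** (FF ** EE) ** diag_mat h) ** FF"
    by (simp only: matrix_mul_assoc)
  also have "\<dots> = EE ** diag_mat (\<lambda>i. g i * \<alpha> i * h i) ** FF" by (simp add: FE diag_mult)
  finally show ?thesis .
qed

lemma pow_EdF: "mat_pow (EE ** diag_mat g ** FF) (Suc k) = EE ** diag_mat (\<lambda>i. g i ^ Suc k * \<alpha> i ^ k) ** FF"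
proof (induction k)
  case 0
  then show ?case by simp
next
  case (Suc k)
  have "mat_pow (EE ** diag_mat g ** FF) (Suc (Suc k)) = (EE ** diag_mat g ** FF) ** mat_pow (EE ** diag_mat g ** FF) (Suc k)"
    by simp
  also have "\<dots> = EE ** diag_mat (\<lambda>i. g i * \<alpha> i * (g i ^ Suc k * \<alpha> i ^ k)) ** FF" by (simp only: Suc EdF_mult)
  also have "(\<lambda>i. g i * \<alpha> i * (g i ^ Suc k * \<alpha> i ^ k)) = (\<lambda>i. g i ^ Suc (Suc k) * \<alpha> i ^ Suc k)"
    by (simp add: fun_eq_iff)
  finally show ?case .
qed

lemma exp_EdF: "mat_exp (EE ** diag_mat g ** FF) = mat 1 + EE ** diag_mat (\<lambda>i. (exp (g i * \<alpha> i) - 1) / \<alpha> i) ** FF"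
proof -
  let ?M = "EE ** diag_mat g ** FF"
  let ?N = "Nmat EE FF"
  define h where "h i k = ((g i * \<alpha> i) ^ k /\<^sub>R fact k) / \<alpha> i - (if k = 0 then 1 / \<alpha> i else 0)" for i k
  have hterm: "(1 / fact k) *\<^sub>R mat_pow ?M k = (if k = 0 then mat 1 else 0) + (\<Sum>i\<in>UNIV. h i k *\<^sub>R ?N i)" for k
  proof (cases k)
    case 0
    then show ?thesis by (simp add: h_def)
  next
    case (Suc m)
    have "(1 / fact k) *\<^sub>R mat_pow ?M k = EE ** ((1 / fact k) *\<^sub>R diag_mat (\<lambda>i. g i ^ Suc m * \<alpha> i ^ m)) ** FF"
      unfolding Suc pow_EdF by (simp only: mm_scale_l mm_scale_r)
    also have "\<dots> = (\<Sum>i\<in>UNIV. ((1 / fact k) * (g i ^ Suc m * \<alpha> i ^ m)) *\<^sub>R ?N i)"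
      unfolding diag_scale EdF_sum ..
    also have "\<dots> = (\<Sum>i\<in>UNIV. h i k *\<^sub>R ?N i)"
    proof (rule sum.cong)
      fix i
      have "\<alpha> i \<noteq> 0" using \<alpha>_pos[of i] by simp
      moreover have pw: "(g i * \<alpha> i) ^ Suc m = (g i ^ Suc m * \<alpha> i ^ m) * \<alpha> i"
        by (simp add: power_mult_distrib)
      ultimately have "(1 / fact k) * (g i ^ Suc m * \<alpha> i ^ m) = h i k"
        unfolding h_def Suc pw by (simp add: divide_inverse)
      then show "((1 / fact k) * (g i ^ Suc m * \<alpha> i ^ m)) *\<^sub>R ?N i = h i k *\<^sub>R ?N i" by simp
    qed simp
    finally show ?thesis using Suc by simp
  qed
  have hs: "h i sums ((exp (g i * \<alpha> i) - 1) / \<alpha> i)" for i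
  proof -
    have "(\<lambda>k. ((g i * \<alpha> i) ^ k /\<^sub>R fact k) / \<alpha> i) sums (exp (g i * \<alpha> i) / \<alpha> i)"
      by (intro sums_divide exp_converges)
    moreover have "(\<lambda>k. if k = 0 then 1 / \<alpha> i else 0) sums (1 / \<alpha> i)"
      using sums_single[of 0 "\<lambda>_. 1 / \<alpha> i"] by simp
    ultimately have "h i sums (exp (g i * \<alpha> i) / \<alpha> i - 1 / \<alpha> i)"
      unfolding h_def by (rule sums_diff)
    then show ?thesis by (simp add: diff_divide_distrib)
  qed
  have "(\<lambda>k. (if k = 0 then mat 1 else 0) + (\<Sum>i\<in>UNIV. h i k *\<^sub>R ?N i))
     sums (mat 1 + (\<Sum>i\<in>UNIV. ((exp (g i * \<alpha> i) - 1) / \<alpha> i) *\<^sub>R ?N i))"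
  proof (rule sums_add)
    show "(\<lambda>k. if k = 0 then mat 1 else 0) sums (mat 1 :: real^'nx^'nx)"
      using sums_single[of 0 "\<lambda>_. mat 1 :: real^'nx^'nx"] by simp
    show "(\<lambda>k. \<Sum>i\<in>UNIV. h i k *\<^sub>R ?N i) sums (\<Sum>i\<in>UNIV. ((exp (g i * \<alpha> i) - 1) / \<alpha> i) *\<^sub>R ?N i)"
      by (rule sums_sum) (rule sums_scaleR_left[OF hs])
  qed
  then have X: "(\<lambda>k. (1 / fact k) *\<^sub>R mat_pow ?M k) sums (mat 1 + (\<Sum>i\<in>UNIV. ((exp (g i * \<alpha> i) - 1) / \<alpha> i) *\<^sub>R ?N i))"
    unfolding hterm .
  have Y: "(\<Sum>i\<in>UNIV. ((exp (g i * \<alpha> i) - 1) / \<alpha> i) *\<^sub>R ?N i) = EE ** diag_mat (\<lambda>i. (exp (g i * \<alpha> i) - 1) / \<alpha> i) ** FF"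
    by (rule EdF_sum[symmetric])
  from X have "(\<lambda>k. (1 / fact k) *\<^sub>R mat_pow ?M k) sums (mat 1 + EE ** diag_mat (\<lambda>i. (exp (g i * \<alpha> i) - 1) / \<alpha> i) ** FF)"
    unfolding Y .
  then show ?thesis unfolding mat_exp_def by (rule sums_unique[symmetric])
qed

lemma int_A:
  assumes l0: "0 \<le> l0" and l01: "l0 \<le> l1"
  shows "integral {l0..l1} (\<lambda>\<mu>. A_mat P H R \<mu>)
     = EE ** diag_mat (\<lambda>i. -(1/2) * (ln (1 + l1 * \<alpha> i) - ln (1 + l0 * \<alpha> i)) / \<alpha> i) ** FF"
proof -
  let ?N = "Nmat EE FF"
  define G where "G i = -(1/2) * (ln (1 + l1 * \<alpha> i) - ln (1 + l0 * \<alpha> i)) / \<alpha> i" for i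
  have gi: "((\<lambda>\<mu>. -(1/2) / (1 + \<mu> * \<alpha> i)) has_integral G i) {l0..l1}" for i
  proof -
    have "((\<lambda>\<mu>. -(1/2) / (1 + \<mu> * \<alpha> i)) has_integral
        ((\<lambda>\<mu>. -(1/2) * ln (1 + \<mu> * \<alpha> i) / \<alpha> i) l1 - (\<lambda>\<mu>. -(1/2) * ln (1 + \<mu> * \<alpha> i) / \<alpha> i) l0)) {l0..l1}"
    proof (rule fundamental_theorem_of_calculus[OF l01])
      fix t assume t: "t \<in> {l0..l1}"
      have pos: "1 + t * \<alpha> i > 0" using t l0 \<alpha>_pos[of i] by (simp add: add_pos_nonneg)
      have ne: "\<alpha> i \<noteq> 0" using \<alpha>_pos[of i] by simp
      have L: "((\<lambda>\<mu>. ln (1 + \<mu> * \<alpha> i)) has_real_derivative 1 / (1 + t * \<alpha> i) * (0 + 1 * \<alpha> i)) (at t within {l0..l1})"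
        by (rule DERIV_chain2[where f=ln], rule DERIV_ln_divide[OF pos], auto intro!: derivative_eq_intros)
      have H: "((\<lambda>\<mu>. -(1/2) * ln (1 + \<mu> * \<alpha> i) / \<alpha> i) has_real_derivative
              -(1/2) * ((0 + 1 * \<alpha> i) / (1 + t * \<alpha> i)) / \<alpha> i) (at t within {l0..l1})"
        using DERIV_cdivide[OF DERIV_cmult[OF L, of "-(1/2)"], of "\<alpha> i"] by simp
      have e: "-(1/2) * ((0 + 1 * \<alpha> i) / (1 + t * \<alpha> i)) / \<alpha> i = -(1/2) / (1 + t * \<alpha> i)"
      proof -
        have "-(1/2) * ((0 + 1 * \<alpha> i) / (1 + t * \<alpha> i)) / \<alpha> i = -(1/2) * ((0 + 1 * \<alpha> i) / (1 + t * \<alpha> i) / \<alpha> i)"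
          by (simp only: times_divide_eq_right)
        also have "(0 + 1 * \<alpha> i) / (1 + t * \<alpha> i) / \<alpha> i = 1 / (1 + t * \<alpha> i)" using ne by simp
        finally show ?thesis by simp
      qed
      show "((\<lambda>\<mu>. -(1/2) * ln (1 + \<mu> * \<alpha> i) / \<alpha> i) has_vector_derivative -(1/2) / (1 + t * \<alpha> i))
          (at t within {l0..l1})"
        using H unfolding e has_real_derivative_iff_has_vector_derivative .
    qed
    then show ?thesis by (simp add: G_def diff_divide_distrib algebra_simps)
  qed
  have "((\<lambda>\<mu>. \<Sum>i\<in>UNIV. (-(1/2) / (1 + \<mu> * \<alpha> i)) *\<^sub>R ?N i) has_integral (\<Sum>i\<in>UNIV. G i *\<^sub>R ?N i)) {l0..l1}"
    by (rule has_integral_sum, simp, rule has_integral_scaleR_left[OF gi])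
  then have "((\<lambda>\<mu>. A_mat P H R \<mu>) has_integral (\<Sum>i\<in>UNIV. G i *\<^sub>R ?N i)) {l0..l1}"
  proof (rule has_integral_eq[rotated])
    fix \<mu> assume "\<mu> \<in> {l0..l1}"
    then have "\<mu> \<ge> 0" using l0 by simp
    then show "(\<Sum>i\<in>UNIV. (-(1/2) / (1 + \<mu> * \<alpha> i)) *\<^sub>R ?N i) = A_mat P H R \<mu>"
      by (simp add: A_eq EdF_sum)
  qed
  then show ?thesis unfolding G_def[symmetric] EdF_sum by (rule integral_unique)
qed

end

theorem mainTheorem4:
  fixes P :: "real^'nx^'nx" and R :: "real^'nz^'nz" and H :: "real^'nx^'nz"
    and xbar :: "real^'nx" and z :: "real^'nz"
    and V :: "real^'nz^'nz" and \<alpha> :: "'nz \<Rightarrow> real"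
    and l0 l1 :: real and x :: "real \<Rightarrow> real^'nx"
  assumes P_pd: "pos_def P" and R_pd: "pos_def R"
    and H_rank: "rank H = CARD('nz)"
    and V_orth: "orthogonal_matrix V"
    and D_eig: "mat_inv_sqrt R ** H ** P ** transpose H ** mat_inv_sqrt R
                  = V ** diag_mat \<alpha> ** transpose V"
    and \<alpha>_pos: "\<And>i. \<alpha> i > 0"
    and l0_nonneg: "0 \<le> l0" and l01: "l0 < l1" and l1_le: "l1 \<le> 1"
    and ode: "\<And>l. l \<in> {l0..l1} \<Longrightarrow>
       (x has_vector_derivative (A_mat P H R l *v x l + b_vec P H R xbar z l)) (at l within {l0..l1})"
  shows
    "(let E = P ** transpose H ** mat_inv_sqrt R ** V;
          Ft = transpose V ** mat_inv_sqrt R ** H;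
          zt = transpose V ** mat_inv_sqrt R *v z;
          xt = Ft *v xbar;
          s1 = (\<lambda>i. sqrt (1 + l1 * \<alpha> i));
          s0 = (\<lambda>i. sqrt (1 + l0 * \<alpha> i));
          \<Omega> = diag_mat (\<lambda>i. (s0 i / s1 i - 1) / \<alpha> i);
          c = (\<chi> i. (\<alpha> i * zt $ i * (l1 * s0 i - l0 * s1 i) + xt $ i * (s0 i - s1 i))
                     / (\<alpha> i * (s1 i)\<^sup>2 * s0 i))
      in x l1 = (mat 1 + E ** \<Omega> ** Ft) *v x l0 + E *v c
         \<and> mat 1 + E ** \<Omega> ** Ft = mat_exp (integral {l0..l1} (\<lambda>\<mu>. A_mat P H R \<mu>)))"
proof -
  interpret kf P R H V \<alpha>
    using R_pd V_orth D_eig \<alpha>_pos by unfold_locales auto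
  have l0l1: "l0 \<le> l1" using l01 by simp
  note e1 = ode_sol[OF l0_nonneg l01 ode]
  define G where "G i = -(1/2) * (ln (1 + l1 * \<alpha> i) - ln (1 + l0 * \<alpha> i)) / \<alpha> i" for i
  have ex: "(exp (G i * \<alpha> i) - 1) / \<alpha> i = (sqrt (1 + l0 * \<alpha> i) / sqrt (1 + l1 * \<alpha> i) - 1) / \<alpha> i" for i
  proof -
    have ne: "\<alpha> i \<noteq> 0" using \<alpha>_pos[of i] by simp
    have p0: "1 + l0 * \<alpha> i > 0" and p1: "1 + l1 * \<alpha> i > 0"
      using l0_nonneg l0l1 \<alpha>_pos[of i] by (auto intro: add_pos_nonneg)
    have "G i * \<alpha> i = ln (1 + l0 * \<alpha> i) / 2 - ln (1 + l1 * \<alpha> i) / 2"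
      using ne by (simp add: G_def field_simps)
    then have "exp (G i * \<alpha> i) = exp (ln (1 + l0 * \<alpha> i) / 2) / exp (ln (1 + l1 * \<alpha> i) / 2)"
      by (simp add: exp_diff)
    also have "\<dots> = sqrt (1 + l0 * \<alpha> i) / sqrt (1 + l1 * \<alpha> i)"
      using sqrt_exp_ln[OF p0] sqrt_exp_ln[OF p1] by simp
    finally show ?thesis by simp
  qed
  have e2: "mat_exp (integral {l0..l1} (\<lambda>\<mu>. A_mat P H R \<mu>))
      = mat 1 + EE ** diag_mat (\<lambda>i. (sqrt (1 + l0 * \<alpha> i) / sqrt (1 + l1 * \<alpha> i) - 1) / \<alpha> i) ** FF"
    unfolding int_A[OF l0_nonneg l0l1] G_def[symmetric] exp_EdF ex ..
  show ?thesis unfolding Let_def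
    using e1 e2 by simp
qed

end
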